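(* Let $\mathcal{E}$ be a collection of environments, where each environment $e\in\mathcal{E}$ has a joint density $p_e(x,y)$ of a feature vector $x=(x^{(1)},\dots,x^{(p)})$ and an outcome $y$. Assume invariance: there exists $z^*\in\{0,1\}^p$ such that the conditional density $p_e(y\mid x^{z^*})$ is the same for all $e\in\mathcal{E}$. Assume moreover that such a $z^*$ is unique. Then, for $z\in\{0,1\}^p$, the equality $$g(y\mid x^z)=p_e(y\mid x^z)\quad\text{for all } e\in\mathcal{E}$$ holds if and only if $z=z^*$.
   Context: For a feature selector $z\in\{0,1\}^p$, $x^z$ denotes the subvector of $x$ consisting of the coordinates $x^{(j)}$ with $z^{(j)}=1$, and $x^{-z}$ the subvector of the remaining coordinates. The local marginal $p_e(x^z)$ and local conditional $p_e(y\mid x^z)$ are derived from the joint $p_e(x,y)$. The pooled conditional is defined by $$g(y\mid x^z):=\frac{\sum_{e\in\mathcal{E}}\int p_e(x,y)\,\mathrm{d}x^{-z}}{\sum_{e\in\mathcal{E}}p_e(x^z)}.$$ *)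

theory Defs
  imports "HOL-Analysis.Analysis"
begin

text \<open>Feature vectors are x :: 'n \<Rightarrow> real (index type 'n finite, p = CARD('n));
  a feature selector z \<in> {0,1}^p is represented by the set z :: 'n set of selected
  coordinates. Functions of x^z are functions of x that only read the coordinates in z.\<close>

definition fill :: "'n set \<Rightarrow> ('n \<Rightarrow> real) \<Rightarrow> ('n \<Rightarrow> real) \<Rightarrow> ('n \<Rightarrow> real)" where
  "fill z x t = (\<lambda>i. if i \<in> z then x i else t i)"

definition local_joint :: "('e \<Rightarrow> ('n \<Rightarrow> real) \<Rightarrow> real \<Rightarrow> real) \<Rightarrow> 'e \<Rightarrow> 'n set
    \<Rightarrow> ('n \<Rightarrow> real) \<Rightarrow> real \<Rightarrow> real" where
  "local_joint p e z x y =
     (\<integral>t. p e (fill z x t) y \<partial>(PiM (UNIV - z) (\<lambda>_. lborel)))"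

definition local_marginal :: "('e \<Rightarrow> ('n \<Rightarrow> real) \<Rightarrow> real \<Rightarrow> real) \<Rightarrow> 'e \<Rightarrow> 'n set
    \<Rightarrow> ('n \<Rightarrow> real) \<Rightarrow> real" where
  "local_marginal p e z x = (\<integral>y. local_joint p e z x y \<partial>lborel)"

definition local_cond :: "('e \<Rightarrow> ('n \<Rightarrow> real) \<Rightarrow> real \<Rightarrow> real) \<Rightarrow> 'e \<Rightarrow> 'n set
    \<Rightarrow> ('n \<Rightarrow> real) \<Rightarrow> real \<Rightarrow> real" where
  "local_cond p e z x y = local_joint p e z x y / local_marginal p e z x"

definition pooled_cond :: "'e set \<Rightarrow> ('e \<Rightarrow> ('n \<Rightarrow> real) \<Rightarrow> real \<Rightarrow> real) \<Rightarrow> 'n set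
    \<Rightarrow> ('n \<Rightarrow> real) \<Rightarrow> real \<Rightarrow> real" where
  "pooled_cond E p z x y =
     (\<Sum>e\<in>E. local_joint p e z x y) / (\<Sum>e\<in>E. local_marginal p e z x)"

definition invariant :: "'e set \<Rightarrow> ('e \<Rightarrow> ('n \<Rightarrow> real) \<Rightarrow> real \<Rightarrow> real) \<Rightarrow> 'n set \<Rightarrow> bool" where
  "invariant E p z \<longleftrightarrow>
     (\<forall>e\<in>E. \<forall>e'\<in>E. \<forall>x y. local_cond p e z x y = local_cond p e' z x y)"

definition is_joint_density :: "(('n::finite \<Rightarrow> real) \<Rightarrow> real \<Rightarrow> real) \<Rightarrow> bool" where
  "is_joint_density f \<longleftrightarrow>
     (\<forall>x y. 0 \<le> f x y) \<and>
     integrable (PiM UNIV (\<lambda>_::'n. lborel) \<Otimes>\<^sub>M lborel) (\<lambda>(x, y). f x y) \<and>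
     (\<integral>(x, y). f x y \<partial>(PiM UNIV (\<lambda>_::'n. lborel) \<Otimes>\<^sub>M lborel)) = 1"

end

theory Submission
  imports Defs
begin

lemma joint_nonneg:
  assumes "\<forall>e\<in>E. is_joint_density (p e)" "e \<in> E"
  shows "0 \<le> local_joint p e z x y"
proof -
  have "\<forall>x y. 0 \<le> p e x y" using assms unfolding is_joint_density_def by blast
  then show ?thesis unfolding local_joint_def by (simp add: integral_nonneg_AE)
qed

lemma marg_nonneg:
  assumes "\<forall>e\<in>E. is_joint_density (p e)" "e \<in> E"
  shows "0 \<le> local_marginal p e z x"
  unfolding local_marginal_def using joint_nonneg[OF assms]
  by (simp add: integral_nonneg_AE)

theorem proposition1:
  fixes E :: "'e set"
    and p :: "'e \<Rightarrow> ('n::finite \<Rightarrow> real) \<Rightarrow> real \<Rightarrow> real"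
    and zstar :: "'n set"
  assumes "finite E"
    and "\<forall>e\<in>E. is_joint_density (p e)"
    and "invariant E p zstar"
    and "\<forall>z'. invariant E p z' \<longrightarrow> z' = zstar"
  shows "(\<forall>e\<in>E. \<forall>x y. pooled_cond E p z x y = local_cond p e z x y) \<longleftrightarrow> z = zstar"
proof
  assume "\<forall>e\<in>E. \<forall>x y. pooled_cond E p z x y = local_cond p e z x y"
  then have "invariant E p z" unfolding invariant_def by metis
  then show "z = zstar" using assms(4) by blast
next
  assume zz: "z = zstar"
  have inv: "\<And>e e' x y. e \<in> E \<Longrightarrow> e' \<in> E \<Longrightarrow> local_cond p e z x y = local_cond p e' z x y"
    using assms(3) zz unfolding invariant_def by blast
  show "\<forall>e\<in>E. \<forall>x y. pooled_cond E p z x y = local_cond p e z x y"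
  proof (intro ballI allI)
    fix e x y assume e: "e \<in> E"
    let ?m = "\<lambda>e. local_marginal p e z x"
    let ?j = "\<lambda>e y. local_joint p e z x y"
    show "pooled_cond E p z x y = local_cond p e z x y"
    proof (cases "\<forall>e'\<in>E. ?m e' = 0")
      case True
      then have "(\<Sum>e\<in>E. ?m e) = 0" by simp
      then show ?thesis using True e unfolding pooled_cond_def local_cond_def by simp
    next
      case False
      then obtain e0 where e0: "e0 \<in> E" "?m e0 \<noteq> 0" by blast
      have allnz: "?m e' \<noteq> 0" if e': "e' \<in> E" for e'
      proof
        assume m0: "?m e' = 0"
        have "\<forall>y. local_cond p e0 z x y = 0"
          using inv[OF e0(1) e'] m0 unfolding local_cond_def by simp
        then have "\<forall>y. ?j e0 y = 0" using e0(2) unfolding local_cond_def by simp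
        then have "local_joint p e0 z x = (\<lambda>y. 0)" by auto
        then have "?m e0 = 0" unfolding local_marginal_def by simp
        with e0 show False by simp
      qed
      define c where "c = local_cond p e z x y"
      have je: "?j e' y = c * ?m e'" if "e' \<in> E" for e'
        using inv[OF that e, of x y] allnz[OF that] unfolding c_def local_cond_def
        by (simp add: field_simps)
      have pos: "(\<Sum>e\<in>E. ?m e) > 0"
      proof -
        have "?m e0 > 0" using e0 marg_nonneg[OF assms(2) e0(1), of z x] by linarith
        moreover have "?m e0 \<le> (\<Sum>e\<in>E. ?m e)"
          using assms(1) e0(1) marg_nonneg[OF assms(2)]
          by (intro member_le_sum) auto
        ultimately show ?thesis by linarith
      qed
      have "(\<Sum>e\<in>E. ?j e y) = c * (\<Sum>e\<in>E. ?m e)"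
        by (simp add: je sum_distrib_left)
      then show ?thesis using pos unfolding pooled_cond_def c_def by simp
    qed
  qed
qed

end
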